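(* Let $u:X\to\mathbb{R}$ be non-constant affine and let $\succ_1,\succ_2$ be hope-and-prepare preferences on $\mathcal{F}$ with unique representations $(u,C_1,D_1)$ and $(u,C_2,D_2)$ respectively. Then: (i) $\succ_1$ is more ambiguity averse than $\succ_2$ if and only if $C_2\subseteq C_1$; (ii) $\succ_1$ is more ambiguity loving than $\succ_2$ if and only if $D_2\subseteq D_1$.
   Context: $S$ is a set of states with algebra $\Sigma$; $X$ is a non-singleton convex subset of a real vector space; $\mathcal{F}$ is the set of simple acts $f:S\to X$; elements of $X$ are identified with constant acts; $\Delta$ is the set of finitely additive probability measures on $(S,\Sigma)$ with weak* topology. A hope-and-prepare preference with representation $(u,C,D)$ ($C,D\subseteq\Delta$ convex compact, $C\cap D\neq\emptyset$) is the relation: $f\succ g$ iff $\min_{p\in C}\int u(f)dp>\min_{p\in C}\int u(g)dp$ and $\max_{p\in D}\int u(f)dp>\max_{p\in D}\int u(g)dp$; unique representation means $C,D$ unique and $u$ unique up to positive affine transformation. $\succ_1$ is more ambiguity averse than $\succ_2$ if for all $f\in\mathcal{F}$, $x\in X$, $f\succ_1 x$ implies $f\succ_2 x$; $\succ_1$ is more ambiguity loving than $\succ_2$ if for all $f\in\mathcal{F}$, $x\in X$, $x\succ_1 f$ implies $x\succ_2 f$. *)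

theory Defs
  imports "HOL-Analysis.Analysis"
begin

text \<open>Convention: a measure is a function on all sets of type 's
that vanishes off Sig (canonical extension by zero), so that it can be viewed
as a point of the product space ('s set \<Rightarrow> real).\<close>
definition fa_probs :: "'s set set \<Rightarrow> ('s set \<Rightarrow> real) set" where
  "fa_probs Sig = {p. (\<forall>A. A \<notin> Sig \<longrightarrow> p A = 0)
      \<and> (\<forall>A\<in>Sig. 0 \<le> p A) \<and> p UNIV = 1
      \<and> (\<forall>A\<in>Sig. \<forall>B\<in>Sig. A \<inter> B = {} \<longrightarrow> p (A \<union> B) = p A + p B)}"

definition simple_acts :: "'s set set \<Rightarrow> 'x set \<Rightarrow> ('s \<Rightarrow> 'x) set" where
  "simple_acts Sig X = {f. range f \<subseteq> X \<and> finite (range f) \<and> (\<forall>y. f -` {y} \<in> Sig)}"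

definition EU :: "('x \<Rightarrow> real) \<Rightarrow> ('s set \<Rightarrow> real) \<Rightarrow> ('s \<Rightarrow> 'x) \<Rightarrow> real" where
  "EU u p f = (\<Sum>y\<in>range f. u y * p (f -` {y}))"

definition affine_on :: "'x::real_vector set \<Rightarrow> ('x \<Rightarrow> real) \<Rightarrow> bool" where
  "affine_on X u \<longleftrightarrow> (\<forall>x\<in>X. \<forall>y\<in>X. \<forall>t::real. 0 \<le> t \<and> t \<le> 1 \<longrightarrow>
       u (t *\<^sub>R x + (1 - t) *\<^sub>R y) = t * u x + (1 - t) * u y)"

definition nonconstant_on :: "'x set \<Rightarrow> ('x \<Rightarrow> real) \<Rightarrow> bool" where
  "nonconstant_on X u \<longleftrightarrow> (\<exists>x\<in>X. \<exists>y\<in>X. u x \<noteq> u y)"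

definition convex_ms :: "('s set \<Rightarrow> real) set \<Rightarrow> bool" where
  "convex_ms C \<longleftrightarrow> (\<forall>p\<in>C. \<forall>q\<in>C. \<forall>t::real. 0 \<le> t \<and> t \<le> 1 \<longrightarrow>
       (\<lambda>A. t * p A + (1 - t) * q A) \<in> C)"

text \<open>Compactness is w.r.t. the product topology on
('s set \<Rightarrow> real), i.e. setwise convergence, which agrees with the weak* topology
on the set of finitely additive probabilities.\<close>
definition hp_rep :: "'s set set \<Rightarrow> 'x::real_vector set \<Rightarrow> (('s \<Rightarrow> 'x) \<Rightarrow> ('s \<Rightarrow> 'x) \<Rightarrow> bool)
    \<Rightarrow> ('x \<Rightarrow> real) \<Rightarrow> ('s set \<Rightarrow> real) set \<Rightarrow> ('s set \<Rightarrow> real) set \<Rightarrow> bool" where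
  "hp_rep Sig X pref u C D \<longleftrightarrow>
     affine_on X u \<and> nonconstant_on X u \<and>
     C \<subseteq> fa_probs Sig \<and> D \<subseteq> fa_probs Sig \<and>
     convex_ms C \<and> convex_ms D \<and> compact C \<and> compact D \<and> C \<inter> D \<noteq> {} \<and>
     (\<forall>f\<in>simple_acts Sig X. \<forall>g\<in>simple_acts Sig X.
        pref f g \<longleftrightarrow>
          ((INF p\<in>C. EU u p f) > (INF p\<in>C. EU u p g) \<and>
           (SUP p\<in>D. EU u p f) > (SUP p\<in>D. EU u p g)))"

definition hp_unique_rep :: "'s set set \<Rightarrow> 'x::real_vector set \<Rightarrow> (('s \<Rightarrow> 'x) \<Rightarrow> ('s \<Rightarrow> 'x) \<Rightarrow> bool)
    \<Rightarrow> ('x \<Rightarrow> real) \<Rightarrow> ('s set \<Rightarrow> real) set \<Rightarrow> ('s set \<Rightarrow> real) set \<Rightarrow> bool" where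
  "hp_unique_rep Sig X pref u C D \<longleftrightarrow>
     hp_rep Sig X pref u C D \<and>
     (\<forall>u' C' D'. hp_rep Sig X pref u' C' D' \<longrightarrow>
        C' = C \<and> D' = D \<and> (\<exists>a>0. \<exists>b. \<forall>x\<in>X. u' x = a * u x + b))"

definition more_ambiguity_averse where
  "more_ambiguity_averse Sig X pref1 pref2 \<longleftrightarrow>
     (\<forall>f\<in>simple_acts Sig X. \<forall>x\<in>X. pref1 f (\<lambda>_. x) \<longrightarrow> pref2 f (\<lambda>_. x))"

definition more_ambiguity_loving where
  "more_ambiguity_loving Sig X pref1 pref2 \<longleftrightarrow>
     (\<forall>f\<in>simple_acts Sig X. \<forall>x\<in>X. pref1 (\<lambda>_. x) f \<longrightarrow> pref2 (\<lambda>_. x) f)"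

end

theory Submission
  imports Defs
begin



lemma fa_D:
  assumes "r \<in> fa_probs Sig"
  shows fa_off: "A \<notin> Sig \<Longrightarrow> r A = 0"
    and fa_nonneg: "A \<in> Sig \<Longrightarrow> 0 \<le> r A"
    and fa_univ: "r UNIV = 1"
    and fa_add: "A \<in> Sig \<Longrightarrow> B \<in> Sig \<Longrightarrow> A \<inter> B = {} \<Longrightarrow> r (A \<union> B) = r A + r B"
  using assms unfolding fa_probs_def by blast+

lemma fa_basic:
  assumes alg: "algebra UNIV Sig" and r: "r \<in> fa_probs Sig" and A: "A \<in> Sig"
  shows "0 \<le> r A" "r A \<le> 1"
proof -
  interpret algebra UNIV Sig by (rule alg)
  have c: "UNIV - A \<in> Sig" using A by (rule compl_sets)
  have "r (A \<union> (UNIV - A)) = r A + r (UNIV - A)" by (rule fa_add[OF r A c]) blast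
  moreover have "A \<union> (UNIV - A) = UNIV" by blast
  moreover have "0 \<le> r (UNIV - A)" by (rule fa_nonneg[OF r c])
  ultimately show "0 \<le> r A" "r A \<le> 1" using fa_nonneg[OF r A] fa_univ[OF r] by auto
qed

lemma fa_empty:
  assumes alg: "algebra UNIV Sig" and r: "r \<in> fa_probs Sig"
  shows "r {} = 0"
proof -
  interpret algebra UNIV Sig by (rule alg)
  have "r ({} \<union> {}) = r {} + r {}" by (rule fa_add[OF r empty_sets empty_sets]) blast
  then show ?thesis by simp
qed



lemma fa_finite_add:
  assumes alg: "algebra UNIV Sig" and r: "r \<in> fa_probs Sig"
  shows "finite Q \<Longrightarrow> Q \<subseteq> Sig \<Longrightarrow> (\<forall>B\<in>Q. \<forall>B'\<in>Q. B \<noteq> B' \<longrightarrow> B \<inter> B' = {})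
     \<Longrightarrow> r (\<Union>Q) = (\<Sum>B\<in>Q. r B)"
proof (induction Q rule: finite_induct)
  case empty
  then show ?case using fa_empty[OF alg r] by simp
next
  case (insert B Q)
  interpret algebra UNIV Sig by (rule alg)
  have BS: "B \<in> Sig" using insert.prems(1) by simp
  have QS': "Q \<subseteq> Sig" using insert.prems(1) by simp
  have QS: "\<Union>Q \<in> Sig" by (rule finite_Union[OF insert.hyps(1) QS'])
  have djQ: "\<forall>B\<in>Q. \<forall>B'\<in>Q. B \<noteq> B' \<longrightarrow> B \<inter> B' = {}"
  proof (intro ballI impI)
    fix C C' assume "C \<in> Q" "C' \<in> Q" "C \<noteq> C'"
    then show "C \<inter> C' = {}" using insert.prems(2) by simp
  qed
  have djB: "B \<inter> C = {}" if "C \<in> Q" for C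
  proof -
    have "B \<noteq> C" using that insert.hyps(2) by auto
    then show ?thesis using insert.prems(2) that by simp
  qed
  have dj: "B \<inter> \<Union>Q = {}" using djB by blast
  have IH: "r (\<Union>Q) = (\<Sum>B\<in>Q. r B)" by (rule insert.IH[OF QS' djQ])
  have "r (\<Union>(insert B Q)) = r (B \<union> \<Union>Q)" by simp
  also have "\<dots> = r B + r (\<Union>Q)" by (rule fa_add[OF r BS QS dj])
  finally show ?case using insert.hyps IH by simp
qed


lemma EU_const:
  assumes "r \<in> fa_probs Sig"
  shows "EU u r (\<lambda>_. x) = u x"
proof -
  have "range (\<lambda>_::'a. x) = {x}" by auto
  moreover have "(\<lambda>_::'a. x) -` {x} = UNIV" by auto
  ultimately show ?thesis using fa_univ[OF assms] unfolding EU_def by simp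
qed

lemma const_simple:
  assumes alg: "algebra UNIV Sig" and "x \<in> X"
  shows "(\<lambda>_. x) \<in> simple_acts Sig X"
proof -
  interpret algebra UNIV Sig by (rule alg)
  have "(\<lambda>_::'a. x) -` {y} \<in> Sig" for y
  proof (cases "y = x")
    case True
    then have "(\<lambda>_::'a. x) -` {y} = UNIV" by auto
    then show ?thesis using top by simp
  next
    case False
    then have "(\<lambda>_::'a. x) -` {y} = {}" by auto
    then show ?thesis using empty_sets by simp
  qed
  moreover have "range (\<lambda>_::'a. x) = {x}" by auto
  ultimately show ?thesis using assms(2) unfolding simple_acts_def by auto
qed



lemma simple_D:
  assumes "f \<in> simple_acts Sig X"
  shows "range f \<subseteq> X" "finite (range f)" "f -` {y} \<in> Sig"
  using assms unfolding simple_acts_def by blast+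

lemma EU_bound:
  assumes alg: "algebra UNIV Sig" and r: "r \<in> fa_probs Sig" and f: "f \<in> simple_acts Sig X"
  shows "\<bar>EU u r f\<bar> \<le> (\<Sum>y\<in>range f. \<bar>u y\<bar>)"
proof -
  have "\<bar>EU u r f\<bar> \<le> (\<Sum>y\<in>range f. \<bar>u y * r (f -` {y})\<bar>)"
    unfolding EU_def by (rule sum_abs)
  also have "\<dots> \<le> (\<Sum>y\<in>range f. \<bar>u y\<bar>)"
  proof (rule sum_mono)
    fix y assume "y \<in> range f"
    have "f -` {y} \<in> Sig" by (rule simple_D(3)[OF f])
    then have "0 \<le> r (f -` {y})" "r (f -` {y}) \<le> 1" using fa_basic[OF alg r] by auto
    then show "\<bar>u y * r (f -` {y})\<bar> \<le> \<bar>u y\<bar>"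
      by (simp add: abs_mult mult_left_le)
  qed
  finally show ?thesis .
qed




lemma realize:
  assumes alg: "algebra UNIV Sig" and fin: "finite (range g)" and gS: "\<And>s. g s \<in> Sig"
    and gs: "\<And>s. s \<in> g s" and gt: "\<And>s t. t \<in> g s \<Longrightarrow> g t = g s"
    and vX: "\<And>s. v (g s) \<in> X"
  shows "(\<lambda>s. v (g s)) \<in> simple_acts Sig X"
    "\<And>r. r \<in> fa_probs Sig \<Longrightarrow> EU u r (\<lambda>s. v (g s)) = (\<Sum>B\<in>range g. u (v B) * r B)"
proof -
  interpret algebra UNIV Sig by (rule alg)
  define f where "f = (\<lambda>s. v (g s))"
  have rf: "range f = v ` range g" unfolding f_def by auto
  have pre: "f -` {y} = \<Union>{B \<in> range g. v B = y}" for y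
  proof
    show "f -` {y} \<subseteq> \<Union>{B \<in> range g. v B = y}" using gs unfolding f_def by blast
    show "\<Union>{B \<in> range g. v B = y} \<subseteq> f -` {y}"
    proof
      fix s assume "s \<in> \<Union>{B \<in> range g. v B = y}"
      then obtain t where "s \<in> g t" "v (g t) = y" by auto
      then show "s \<in> f -` {y}" using gt unfolding f_def by auto
    qed
  qed
  have finy: "finite {B \<in> range g. v B = y}" for y using fin by auto
  have subS: "{B \<in> range g. v B = y} \<subseteq> Sig" for y using gS by auto
  have dj: "\<forall>B\<in>Q. \<forall>B'\<in>Q. B \<noteq> B' \<longrightarrow> B \<inter> B' = {}" if Q: "Q \<subseteq> range g" for Q
  proof (intro ballI impI)
    fix B B' assume "B \<in> Q" "B' \<in> Q" "B \<noteq> B'"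
    then obtain a b where "B = g a" "B' = g b" using Q by blast
    then show "B \<inter> B' = {}" using gt \<open>B \<noteq> B'\<close> by blast
  qed
  have preS: "f -` {y} \<in> Sig" for y
    unfolding pre by (rule finite_Union[OF finy subS])
  have "range f \<subseteq> X" using vX unfolding f_def by auto
  moreover have "finite (range f)" using rf fin by simp
  ultimately have "f \<in> simple_acts Sig X" using preS unfolding simple_acts_def by blast
  then show "(\<lambda>s. v (g s)) \<in> simple_acts Sig X" unfolding f_def .
  fix r assume r: "r \<in> fa_probs Sig"
  have pr: "r (f -` {y}) = (\<Sum>B\<in>{B \<in> range g. v B = y}. r B)" for y
    unfolding pre by (rule fa_finite_add[OF alg r finy subS dj]) blast
  have "EU u r f = (\<Sum>y\<in>range f. u y * (\<Sum>B\<in>{B \<in> range g. v B = y}. r B))"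
    unfolding EU_def pr by simp
  also have "\<dots> = (\<Sum>y\<in>range f. (\<Sum>B\<in>{B \<in> range g. v B = y}. u (v B) * r B))"
    by (auto simp: sum_distrib_left intro!: sum.cong)
  also have "\<dots> = (\<Sum>B\<in>range g. u (v B) * r B)"
    by (rule sum.group) (use fin rf in auto)
  finally show "EU u r (\<lambda>s. v (g s)) = (\<Sum>B\<in>range g. u (v B) * r B)" unfolding f_def .
qed


lemma separate:
  assumes alg: "algebra UNIV Sig" and KS: "K \<subseteq> fa_probs Sig" and cK: "compact K"
    and cvK: "convex_ms K" and p: "p \<in> fa_probs Sig" and pK: "p \<notin> K"
  shows "\<exists>g c \<delta>. finite (range g) \<and> (\<forall>s. g s \<in> Sig) \<and> (\<forall>s. s \<in> g s)
     \<and> (\<forall>s t. t \<in> g s \<longrightarrow> g t = g s) \<and> \<delta> > 0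
     \<and> (\<forall>r\<in>K. (\<Sum>B\<in>range g. c B * p B) + \<delta> \<le> (\<Sum>B\<in>range g. c B * r B))"
proof (cases "K = {}")
  case True
  interpret algebra UNIV Sig by (rule alg)
  have "finite (range (\<lambda>_::'a. UNIV::'a set))" by simp
  moreover have "\<forall>s::'a. (\<lambda>_::'a. UNIV::'a set) s \<in> Sig" using top by simp
  ultimately show ?thesis using True
    by (intro exI[of _ "\<lambda>_::'a. UNIV::'a set"] exI[of _ "\<lambda>_. 0::real"] exI[of _ "1::real"]) simp
next
  case Kne: False
  interpret algebra UNIV Sig by (rule alg)
  have cont_ev: "continuous_on UNIV (\<lambda>r::'a set \<Rightarrow> real. r A)" for A
    by (rule continuous_on_product_coordinates)
  have opn: "open {r::'a set \<Rightarrow> real. r A \<noteq> p A}" for A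
    by (rule open_Collect_neq[OF cont_ev continuous_on_const])
  have cov: "K \<subseteq> (\<Union>A\<in>UNIV. {r. r A \<noteq> p A})"
  proof
    fix r assume "r \<in> K"
    then have "r \<noteq> p" using pK by auto
    then obtain A where "r A \<noteq> p A" by (meson ext)
    then show "r \<in> (\<Union>A\<in>UNIV. {r. r A \<noteq> p A})" by auto
  qed
  obtain AA where AAfin: "finite AA" and AAcov: "K \<subseteq> (\<Union>A\<in>AA. {r. r A \<noteq> p A})"
  proof -
    have "\<exists>AA. finite AA \<and> K \<subseteq> (\<Union>A\<in>AA. {r. r A \<noteq> p A})"
    proof (rule compactE_image[OF cK, of UNIV "\<lambda>A. {r. r A \<noteq> p A}"])
      show "open {r. r T \<noteq> p T}" for T by (rule opn)
      show "K \<subseteq> (\<Union>A\<in>UNIV. {r. r A \<noteq> p A})" by (rule cov)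
      show "\<exists>AA. finite AA \<and> K \<subseteq> (\<Union>A\<in>AA. {r. r A \<noteq> p A})"
        if "C' \<subseteq> UNIV" "finite C'" "K \<subseteq> (\<Union>A\<in>C'. {r. r A \<noteq> p A})" for C'
        using that by blast
    qed
    then show ?thesis using that by blast
  qed
  define A' where "A' = AA \<inter> Sig"
  have A'fin: "finite A'" using AAfin unfolding A'_def by auto
  have A'cov: "\<exists>A\<in>A'. r A \<noteq> p A" if rK: "r \<in> K" for r
  proof -
    obtain A where A: "A \<in> AA" "r A \<noteq> p A" using AAcov rK by auto
    have "A \<in> Sig"
    proof (rule ccontr)
      assume "A \<notin> Sig"
      moreover have "r \<in> fa_probs Sig" using KS rK by blast
      ultimately have "r A = 0" "p A = 0" using fa_off p by blast+
      then show False using A by simp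
    qed
    then show ?thesis using A unfolding A'_def by auto
  qed
  define atom where "atom s = (\<Inter>A\<in>A'. if s \<in> A then A else UNIV - A)" for s
  have atom_mem: "t \<in> atom s \<longleftrightarrow> (\<forall>A\<in>A'. t \<in> A \<longleftrightarrow> s \<in> A)" for s t
    unfolding atom_def by auto
  have atom_self: "s \<in> atom s" for s by (simp add: atom_mem)
  have atom_eq: "atom t = atom s" if "t \<in> atom s" for s t
    using that by (auto simp: atom_mem set_eq_iff)
  have atom_S: "atom s \<in> Sig" for s
  proof (cases "A' = {}")
    case True then show ?thesis unfolding atom_def using top by simp
  next
    case False
    show ?thesis unfolding atom_def
      by (rule finite_INT[OF A'fin False]) (use A'_def in auto)
  qed
  have atom_fin: "finite (range atom)"
  proof -
    have "range atom \<subseteq> (\<lambda>T. \<Inter>A\<in>A'. if A \<in> T then A else UNIV - A) ` Pow A'"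
    proof
      fix B assume "B \<in> range atom"
      then obtain s where "B = atom s" by auto
      moreover have "atom s = (\<lambda>T. \<Inter>A\<in>A'. if A \<in> T then A else UNIV - A) {A\<in>A'. s \<in> A}"
        unfolding atom_def by (rule INF_cong) auto
      ultimately have "B = (\<lambda>T. \<Inter>A\<in>A'. if A \<in> T then A else UNIV - A) {A\<in>A'. s \<in> A}"
        by simp
      then show "B \<in> (\<lambda>T. \<Inter>A\<in>A'. if A \<in> T then A else UNIV - A) ` Pow A'" by blast
    qed
    then show ?thesis using A'fin by (meson finite_Pow_iff finite_imageI finite_subset)
  qed
  have dj: "\<forall>B\<in>Q. \<forall>B'\<in>Q. B \<noteq> B' \<longrightarrow> B \<inter> B' = {}" if Q: "Q \<subseteq> range atom" for Q
  proof (intro ballI impI)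
    fix B B' assume "B \<in> Q" "B' \<in> Q" "B \<noteq> B'"
    then obtain a b where "B = atom a" "B' = atom b" using Q by blast
    show "B \<inter> B' = {}"
    proof (rule ccontr)
      assume "B \<inter> B' \<noteq> {}"
      then obtain x where "x \<in> atom a" "x \<in> atom b" using \<open>B = atom a\<close> \<open>B' = atom b\<close> by blast
      then have "atom a = atom b" using atom_eq by metis
      then show False using \<open>B = atom a\<close> \<open>B' = atom b\<close> \<open>B \<noteq> B'\<close> by simp
    qed
  qed
  have decomp: "r A = (\<Sum>B\<in>{B\<in>range atom. B \<subseteq> A}. r B)" if r: "r \<in> fa_probs Sig" and A: "A \<in> A'" for r A
  proof -
    have "A = \<Union>{B\<in>range atom. B \<subseteq> A}"
    proof
      show "A \<subseteq> \<Union>{B\<in>range atom. B \<subseteq> A}"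
      proof
        fix s assume "s \<in> A"
        then have "atom s \<subseteq> A" using A by (auto simp: atom_mem)
        then show "s \<in> \<Union>{B\<in>range atom. B \<subseteq> A}" using atom_self by blast
      qed
    qed auto
    then have "r A = r (\<Union>{B\<in>range atom. B \<subseteq> A})" by simp
    also have "\<dots> = (\<Sum>B\<in>{B\<in>range atom. B \<subseteq> A}. r B)"
    proof (rule fa_finite_add[OF alg r])
      show "finite {B\<in>range atom. B \<subseteq> A}" using atom_fin by simp
      show "{B\<in>range atom. B \<subseteq> A} \<subseteq> Sig" using atom_S by blast
      show "\<forall>B\<in>{B\<in>range atom. B \<subseteq> A}. \<forall>B'\<in>{B\<in>range atom. B \<subseteq> A}. B \<noteq> B' \<longrightarrow> B \<inter> B' = {}"
        by (rule dj) blast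
    qed
    finally show ?thesis .
  qed
  have differ: "\<exists>B\<in>range atom. r B \<noteq> p B" if rK: "r \<in> K" for r
  proof (rule ccontr)
    assume "\<not> ?thesis"
    then have eq: "\<And>B. B \<in> range atom \<Longrightarrow> r B = p B" by auto
    obtain A where A: "A \<in> A'" "r A \<noteq> p A" using A'cov rK by blast
    have rP: "r \<in> fa_probs Sig" using KS rK by blast
    have "r A = (\<Sum>B\<in>{B\<in>range atom. B \<subseteq> A}. r B)" by (rule decomp[OF rP A(1)])
    also have "\<dots> = (\<Sum>B\<in>{B\<in>range atom. B \<subseteq> A}. p B)" by (rule sum.cong) (simp_all add: eq)
    also have "\<dots> = p A" by (rule decomp[OF p A(1), symmetric])
    finally have "r A = p A" .
    then show False using A by simp
  qed
  define P where "P = range atom"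
  define d where "d r = (\<Sum>B\<in>P. (r B - p B)^2)" for r :: "'a set \<Rightarrow> real"
  have "continuous_on K d"
    unfolding d_def
    by (intro continuous_intros continuous_on_subset[OF cont_ev]) auto
  then obtain q0 where q0: "q0 \<in> K" and q0min: "\<And>r. r \<in> K \<Longrightarrow> d q0 \<le> d r"
    using continuous_attains_inf[OF cK Kne] by blast
  define c where "c B = q0 B - p B" for B
  define \<delta> where "\<delta> = d q0"
  have \<delta>eq: "\<delta> = (\<Sum>B\<in>P. c B * c B)" unfolding \<delta>_def d_def c_def by (simp add: power2_eq_square)
  have \<delta>pos: "\<delta> > 0"
  proof -
    obtain B where B: "B \<in> P" "q0 B \<noteq> p B" using differ[OF q0] unfolding P_def by auto
    have "c B \<noteq> 0" using B unfolding c_def by simp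
    then have "0 < c B * c B" using not_real_square_gt_zero by blast
    also have "\<dots> \<le> (\<Sum>B\<in>P. c B * c B)"
      by (rule member_le_sum) (use B atom_fin P_def in auto)
    finally show ?thesis using \<delta>eq by simp
  qed
  have key: "0 \<le> (\<Sum>B\<in>P. c B * (r B - q0 B))" if r: "r \<in> K" for r
  proof (rule ccontr)
    define e where "e B = r B - q0 B" for B
    define S where "S = (\<Sum>B\<in>P. c B * e B)"
    define E where "E = (\<Sum>B\<in>P. e B * e B)"
    assume "\<not> 0 \<le> (\<Sum>B\<in>P. c B * (r B - q0 B))"
    then have Sneg: "S < 0" unfolding S_def e_def by simp
    have E0: "0 \<le> E" unfolding E_def by (auto intro: sum_nonneg)
    have ineq: "0 \<le> 2 * S + t * E" if t: "0 < t" "t \<le> 1" for t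
    proof -
      define qt where "qt = (\<lambda>A. t * r A + (1 - t) * q0 A)"
      have "qt \<in> K" using cvK r q0 t unfolding convex_ms_def qt_def by auto
      then have "d q0 \<le> d qt" by (rule q0min)
      moreover have "d qt = \<delta> + t * (2 * S + t * E)"
      proof -
        have "d qt = (\<Sum>B\<in>P. (c B + t * e B)^2)"
          unfolding d_def qt_def c_def e_def by (auto intro!: sum.cong simp: algebra_simps)
        also have "\<dots> = (\<Sum>B\<in>P. c B * c B + t * (2 * (c B * e B)) + t * (t * (e B * e B)))"
          by (auto intro!: sum.cong simp: algebra_simps power2_eq_square)
        also have "\<dots> = \<delta> + t * (2 * S + t * E)"
          unfolding \<delta>eq S_def E_def
          by (simp add: sum.distrib sum_distrib_left algebra_simps)
        finally show ?thesis .
      qed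
      ultimately have "0 \<le> t * (2 * S + t * E)" unfolding \<delta>_def by simp
      then show ?thesis using t by (simp add: zero_le_mult_iff)
    qed
    define t where "t = min 1 (- S / (E + 1))"
    have "0 < - S / (E + 1)" using Sneg E0 by (intro divide_pos_pos) auto
    then have t0: "0 < t" "t \<le> 1" unfolding t_def by auto
    have "t * E \<le> (- S / (E + 1)) * E" using E0 unfolding t_def
      by (intro mult_right_mono) auto
    also have "\<dots> \<le> - S"
    proof -
      have "(- S / (E + 1)) * E = - S * (E / (E + 1))" by simp
      also have "\<dots> \<le> - S * 1"
        using Sneg E0 by (intro mult_left_mono) auto
      finally show ?thesis by simp
    qed
    finally have "2 * S + t * E < 0" using Sneg by simp
    then show False using ineq[OF t0] by simp
  qed
  show ?thesis
  proof (intro exI conjI allI ballI impI)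
    show "finite (range atom)" by (rule atom_fin)
    show "atom s \<in> Sig" for s by (rule atom_S)
    show "s \<in> atom s" for s by (rule atom_self)
    show "atom t = atom s" if "t \<in> atom s" for s t using atom_eq that .
    show "0 < \<delta>" by (rule \<delta>pos)
    fix r assume r: "r \<in> K"
    have "(\<Sum>B\<in>P. c B * r B) = (\<Sum>B\<in>P. c B * q0 B) + (\<Sum>B\<in>P. c B * (r B - q0 B))"
      by (simp add: sum.distrib[symmetric] algebra_simps)
    also have "(\<Sum>B\<in>P. c B * q0 B) = (\<Sum>B\<in>P. c B * p B) + \<delta>"
      unfolding \<delta>eq c_def by (simp add: sum.distrib[symmetric] algebra_simps)
    finally show "(\<Sum>B\<in>range atom. c B * p B) + \<delta> \<le> (\<Sum>B\<in>range atom. c B * r B)"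
      using key[OF r] unfolding P_def by simp
  qed
qed


lemma partition_sum:
  assumes alg: "algebra UNIV Sig" and r: "r \<in> fa_probs Sig" and fin: "finite (range g)"
    and gS: "\<And>s. g s \<in> Sig" and gs: "\<And>s. s \<in> g s" and gt: "\<And>s t. t \<in> g s \<Longrightarrow> g t = g s"
  shows "(\<Sum>B\<in>range g. r B) = 1"
proof -
  have dj: "\<forall>B\<in>range g. \<forall>B'\<in>range g. B \<noteq> B' \<longrightarrow> B \<inter> B' = {}"
  proof (intro ballI impI)
    fix B B' assume "B \<in> range g" "B' \<in> range g" "B \<noteq> B'"
    then obtain a b where "B = g a" "B' = g b" by blast
    then show "B \<inter> B' = {}" using gt \<open>B \<noteq> B'\<close> by blast
  qed
  have "\<Union>(range g) = UNIV" using gs by blast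
  then have "r (\<Union>(range g)) = 1" using fa_univ[OF r] by simp
  moreover have "r (\<Union>(range g)) = (\<Sum>B\<in>range g. r B)"
    by (rule fa_finite_add[OF alg r fin]) (use gS dj in auto)
  ultimately show ?thesis by simp
qed

lemma value_exists:
  assumes cX: "convex X" and aff: "affine_on X u" and x0: "x0 \<in> X" and x1: "x1 \<in> X"
    and lt: "u x0 < u x1" and a: "u x0 \<le> a" "a \<le> u x1"
  shows "\<exists>x\<in>X. u x = a"
proof -
  define t where "t = (a - u x0) / (u x1 - u x0)"
  have t: "0 \<le> t" "t \<le> 1" using a lt unfolding t_def by (auto simp: divide_simps)
  have mem: "t *\<^sub>R x1 + (1 - t) *\<^sub>R x0 \<in> X"
    using cX x0 x1 t unfolding convex_def by auto
  have "u (t *\<^sub>R x1 + (1 - t) *\<^sub>R x0) = t * u x1 + (1 - t) * u x0"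
    using aff x0 x1 t unfolding affine_on_def by blast
  also have "\<dots> = u x0 + t * (u x1 - u x0)" by (simp add: algebra_simps)
  also have "t * (u x1 - u x0) = a - u x0" using lt unfolding t_def by simp
  also have "u x0 + (a - u x0) = a" by simp
  finally show ?thesis using mem by blast
qed

lemma realize_lin:
  assumes alg: "algebra UNIV Sig" and cX: "convex X" and aff: "affine_on X u"
    and x0: "x0 \<in> X" and x1: "x1 \<in> X" and lt: "u x0 < u x1"
    and fin: "finite (range g)" and gS: "\<And>s. g s \<in> Sig"
    and gs: "\<And>s. s \<in> g s" and gt: "\<And>s t. t \<in> g s \<Longrightarrow> g t = g s"
    and M: "M > 0" and cM: "\<And>B. \<bar>c B\<bar> \<le> M"
  shows "\<exists>f \<alpha> \<beta>. f \<in> simple_acts Sig X \<and> \<beta> > 0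
     \<and> (\<forall>r\<in>fa_probs Sig. EU u r f = \<alpha> + \<beta> * (\<Sum>B\<in>range g. c B * r B))
     \<and> (\<forall>w. \<bar>w\<bar> \<le> M \<longrightarrow> (\<exists>x\<in>X. u x = \<alpha> + \<beta> * w))"
proof -
  define \<alpha> where "\<alpha> = (u x0 + u x1) / 2"
  define \<beta> where "\<beta> = (u x1 - u x0) / (2 * M)"
  have \<beta>pos: "\<beta> > 0" using lt M unfolding \<beta>_def by simp
  have val: "\<exists>x\<in>X. u x = \<alpha> + \<beta> * w" if w: "\<bar>w\<bar> \<le> M" for w
  proof -
    have "\<bar>\<beta> * w\<bar> = \<beta> * \<bar>w\<bar>" using \<beta>pos by (simp add: abs_mult)
    also have "\<dots> \<le> \<beta> * M" using \<beta>pos w by (intro mult_left_mono) auto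
    also have "\<beta> * M = (u x1 - u x0) / 2" unfolding \<beta>_def using M by (simp add: field_simps)
    finally have "\<bar>\<beta> * w\<bar> \<le> (u x1 - u x0) / 2" .
    moreover have "\<beta> * w \<le> \<bar>\<beta> * w\<bar>" "- (\<beta> * w) \<le> \<bar>\<beta> * w\<bar>" by auto
    ultimately have h1: "\<beta> * w \<le> (u x1 - u x0) / 2" and h2: "- (\<beta> * w) \<le> (u x1 - u x0) / 2"
      by linarith+
    have "u x0 \<le> \<alpha> + \<beta> * w" using h2 unfolding \<alpha>_def by (simp add: field_simps)
    moreover have "\<alpha> + \<beta> * w \<le> u x1" using h1 unfolding \<alpha>_def by (simp add: field_simps)
    ultimately have "u x0 \<le> \<alpha> + \<beta> * w" "\<alpha> + \<beta> * w \<le> u x1" by blast+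
    then show ?thesis using value_exists[OF cX aff x0 x1 lt] by blast
  qed
  define v where "v B = (SOME x. x \<in> X \<and> u x = \<alpha> + \<beta> * c B)" for B
  have v: "v B \<in> X \<and> u (v B) = \<alpha> + \<beta> * c B" for B
    unfolding v_def by (rule someI_ex) (use val[OF cM[of B]] in blast)
  have vX: "\<And>s. v (g s) \<in> X" using v by blast
  note R = realize[where v=v and g=g and X=X, OF alg fin gS gs gt vX]
  show ?thesis
  proof (intro exI conjI ballI allI impI)
    show "(\<lambda>s. v (g s)) \<in> simple_acts Sig X" by (rule R(1))
    show "\<beta> > 0" by (rule \<beta>pos)
    show "\<exists>x\<in>X. u x = \<alpha> + \<beta> * w" if "\<bar>w\<bar> \<le> M" for w using val that .
    fix r assume r: "r \<in> fa_probs Sig"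
    have "EU u r (\<lambda>s. v (g s)) = (\<Sum>B\<in>range g. u (v B) * r B)" using R(2) r by blast
    also have "\<dots> = (\<Sum>B\<in>range g. \<alpha> * r B + \<beta> * (c B * r B))"
      using v by (auto intro!: sum.cong simp: algebra_simps)
    also have "\<dots> = \<alpha> * (\<Sum>B\<in>range g. r B) + \<beta> * (\<Sum>B\<in>range g. c B * r B)"
      by (simp add: sum.distrib sum_distrib_left)
    also have "(\<Sum>B\<in>range g. r B) = 1" by (rule partition_sum[OF alg r fin gS gs gt])
    finally show "EU u r (\<lambda>s. v (g s)) = \<alpha> + \<beta> * (\<Sum>B\<in>range g. c B * r B)" by simp
  qed
qed

lemma bdd_EU:
  assumes alg: "algebra UNIV Sig" and K: "K \<subseteq> fa_probs Sig" and f: "f \<in> simple_acts Sig X"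
  shows "bdd_below ((\<lambda>p. EU u p f) ` K)" "bdd_above ((\<lambda>p. EU u p f) ` K)"
proof -
  have b: "\<bar>EU u p f\<bar> \<le> (\<Sum>y\<in>range f. \<bar>u y\<bar>)" if "p \<in> K" for p
    using EU_bound[OF alg _ f] K that by blast
  show "bdd_below ((\<lambda>p. EU u p f) ` K)"
    by (rule bdd_belowI2[where m = "- (\<Sum>y\<in>range f. \<bar>u y\<bar>)"]) (use b in force)
  show "bdd_above ((\<lambda>p. EU u p f) ` K)"
    by (rule bdd_aboveI2[where M = "(\<Sum>y\<in>range f. \<bar>u y\<bar>)"]) (use b in force)
qed

lemma hp_D:
  assumes hp: "hp_rep Sig X pref u C D"
  shows hp_CS: "C \<subseteq> fa_probs Sig" and hp_DS: "D \<subseteq> fa_probs Sig" and hp_CD: "C \<inter> D \<noteq> {}"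
    and hp_cC: "compact C" and hp_cD: "compact D" and hp_vC: "convex_ms C" and hp_vD: "convex_ms D"
  using hp unfolding hp_rep_def by blast+

lemma hp_pr:
  assumes hp: "hp_rep Sig X pref u C D"
    and "f \<in> simple_acts Sig X" "g \<in> simple_acts Sig X"
  shows "pref f g \<longleftrightarrow>
          ((INF p\<in>C. EU u p f) > (INF p\<in>C. EU u p g) \<and>
           (SUP p\<in>D. EU u p f) > (SUP p\<in>D. EU u p g))"
proof -
  have "\<forall>f\<in>simple_acts Sig X. \<forall>g\<in>simple_acts Sig X.
        pref f g \<longleftrightarrow>
          ((INF p\<in>C. EU u p f) > (INF p\<in>C. EU u p g) \<and>
           (SUP p\<in>D. EU u p f) > (SUP p\<in>D. EU u p g))"
    using hp unfolding hp_rep_def by (elim conjE)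
  then show ?thesis using assms(2,3) by blast
qed

lemma pref_fx:
  assumes alg: "algebra UNIV Sig" and hp: "hp_rep Sig X pref u C D"
    and f: "f \<in> simple_acts Sig X" and x: "x \<in> X"
  shows "pref f (\<lambda>_. x) \<longleftrightarrow> (INF p\<in>C. EU u p f) > u x"
    and "pref (\<lambda>_. x) f \<longleftrightarrow> u x > (SUP p\<in>D. EU u p f)"
proof -
  have CS: "C \<subseteq> fa_probs Sig" and DS: "D \<subseteq> fa_probs Sig" and CD: "C \<inter> D \<noteq> {}"
    using hp_D[OF hp] by blast+
  note pr = hp_pr[OF hp]
  have Cne: "C \<noteq> {}" and Dne: "D \<noteq> {}" using CD by auto
  have cx: "(\<lambda>_. x) \<in> simple_acts Sig X" by (rule const_simple[OF alg x])
  have ic: "(INF p\<in>C. EU u p (\<lambda>_. x)) = u x"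
  proof -
    have "(INF p\<in>C. EU u p (\<lambda>_. x)) = (INF p\<in>C. u x)"
    proof (rule INF_cong[OF refl])
      fix p assume "p \<in> C"
      then have "p \<in> fa_probs Sig" using CS by blast
      then show "EU u p (\<lambda>_. x) = u x" by (rule EU_const)
    qed
    then show ?thesis using Cne by simp
  qed
  have sc: "(SUP p\<in>D. EU u p (\<lambda>_. x)) = u x"
  proof -
    have "(SUP p\<in>D. EU u p (\<lambda>_. x)) = (SUP p\<in>D. u x)"
    proof (rule SUP_cong[OF refl])
      fix p assume "p \<in> D"
      then have "p \<in> fa_probs Sig" using DS by blast
      then show "EU u p (\<lambda>_. x) = u x" by (rule EU_const)
    qed
    then show ?thesis using Dne by simp
  qed
  obtain q where q: "q \<in> C" "q \<in> D" using CD by blast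
  have le: "(INF p\<in>C. EU u p f) \<le> (SUP p\<in>D. EU u p f)"
  proof -
    have "(INF p\<in>C. EU u p f) \<le> EU u q f" by (rule cINF_lower[OF bdd_EU(1)[OF alg CS f] q(1)])
    also have "\<dots> \<le> (SUP p\<in>D. EU u p f)" by (rule cSUP_upper[OF q(2) bdd_EU(2)[OF alg DS f]])
    finally show ?thesis .
  qed
  have A: "pref f (\<lambda>_. x) \<longleftrightarrow> ((INF p\<in>C. EU u p f) > u x \<and> (SUP p\<in>D. EU u p f) > u x)"
    using pr[OF f cx] unfolding ic sc .
  have B: "pref (\<lambda>_. x) f \<longleftrightarrow> (u x > (INF p\<in>C. EU u p f) \<and> u x > (SUP p\<in>D. EU u p f))"
    using pr[OF cx f] unfolding ic sc .
  show "pref f (\<lambda>_. x) \<longleftrightarrow> (INF p\<in>C. EU u p f) > u x"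
  proof
    assume "pref f (\<lambda>_. x)"
    then show "(INF p\<in>C. EU u p f) > u x" using A by blast
  next
    assume h: "(INF p\<in>C. EU u p f) > u x"
    then have "(SUP p\<in>D. EU u p f) > u x" using le by linarith
    then show "pref f (\<lambda>_. x)" using A h by blast
  qed
  show "pref (\<lambda>_. x) f \<longleftrightarrow> u x > (SUP p\<in>D. EU u p f)"
  proof
    assume "pref (\<lambda>_. x) f"
    then show "u x > (SUP p\<in>D. EU u p f)" using B by blast
  next
    assume h: "u x > (SUP p\<in>D. EU u p f)"
    then have "u x > (INF p\<in>C. EU u p f)" using le by linarith
    then show "pref (\<lambda>_. x) f" using B h by blast
  qed
qed

lemma L_bound:
  assumes alg: "algebra UNIV Sig" and p: "p \<in> fa_probs Sig" and gS: "\<And>s. g s \<in> Sig"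
  shows "\<bar>\<Sum>B\<in>range g. c B * p B\<bar> \<le> (\<Sum>B\<in>range g. \<bar>c B\<bar>)"
proof -
  have "\<bar>\<Sum>B\<in>range g. c B * p B\<bar> \<le> (\<Sum>B\<in>range g. \<bar>c B * p B\<bar>)" by (rule sum_abs)
  also have "\<dots> \<le> (\<Sum>B\<in>range g. \<bar>c B\<bar>)"
  proof (rule sum_mono)
    fix B assume "B \<in> range g"
    then have "0 \<le> p B" "p B \<le> 1" using fa_basic[OF alg p] gS by auto
    then show "\<bar>c B * p B\<bar> \<le> \<bar>c B\<bar>" by (simp add: abs_mult mult_left_le)
  qed
  finally show ?thesis .
qed

lemma c_bound:
  fixes c :: "'b \<Rightarrow> real" and g :: "'a \<Rightarrow> 'b"
  assumes "finite (range g)" "\<delta> > 0" "B \<in> range g"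
  shows "\<bar>c B\<bar> \<le> (\<Sum>B\<in>range g. \<bar>c B\<bar>) + \<delta>"
proof -
  have "\<bar>c B\<bar> \<le> (\<Sum>B\<in>range g. \<bar>c B\<bar>)"
    using member_le_sum[of B "range g" "\<lambda>B. \<bar>c B\<bar>"] assms by simp
  then show ?thesis using assms by simp
qed

theorem proposition2:
  fixes Sig :: "'s set set" and X :: "'x::real_vector set" and u :: "'x \<Rightarrow> real"
    and pref1 pref2 :: "('s \<Rightarrow> 'x) \<Rightarrow> ('s \<Rightarrow> 'x) \<Rightarrow> bool"
    and C1 D1 C2 D2 :: "('s set \<Rightarrow> real) set"
  assumes "algebra UNIV Sig"
    and "convex X" and "\<exists>x\<in>X. \<exists>y\<in>X. x \<noteq> y"
    and "affine_on X u" and "nonconstant_on X u"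
    and "hp_unique_rep Sig X pref1 u C1 D1"
    and "hp_unique_rep Sig X pref2 u C2 D2"
  shows "(more_ambiguity_averse Sig X pref1 pref2 \<longleftrightarrow> C2 \<subseteq> C1)
       \<and> (more_ambiguity_loving Sig X pref1 pref2 \<longleftrightarrow> D2 \<subseteq> D1)"
proof -
  note alg = assms(1) and cX = assms(2) and aff = assms(4)
  have h1: "hp_rep Sig X pref1 u C1 D1"
    using assms(6) unfolding hp_unique_rep_def by (rule conjunct1)
  have h2: "hp_rep Sig X pref2 u C2 D2"
    using assms(7) unfolding hp_unique_rep_def by (rule conjunct1)
  have C1S: "C1 \<subseteq> fa_probs Sig" and D1S: "D1 \<subseteq> fa_probs Sig" and CD1: "C1 \<inter> D1 \<noteq> {}"
    and cC1: "compact C1" and cD1: "compact D1" and vC1: "convex_ms C1" and vD1: "convex_ms D1"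
    using hp_D[OF h1] by blast+
  have C2S: "C2 \<subseteq> fa_probs Sig" and D2S: "D2 \<subseteq> fa_probs Sig" and CD2: "C2 \<inter> D2 \<noteq> {}"
    using hp_D[OF h2] by blast+
  obtain x0 x1 where x0: "x0 \<in> X" and x1: "x1 \<in> X" and lt: "u x0 < u x1"
  proof -
    obtain a b where "a \<in> X" "b \<in> X" "u a \<noteq> u b" using assms(5) unfolding nonconstant_on_def by auto
    then show ?thesis using that by (cases "u a < u b") auto
  qed
  have part1: "more_ambiguity_averse Sig X pref1 pref2 \<longleftrightarrow> C2 \<subseteq> C1"
  proof
    assume av: "more_ambiguity_averse Sig X pref1 pref2"
    show "C2 \<subseteq> C1"
    proof
      fix p assume pC2: "p \<in> C2"
      show "p \<in> C1"
      proof (rule ccontr)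
        assume pC1: "p \<notin> C1"
        have p: "p \<in> fa_probs Sig" using pC2 C2S by auto
        obtain g c \<delta> where fin: "finite (range g)" and gS: "\<forall>s. g s \<in> Sig" and gs: "\<forall>s. s \<in> g s"
          and gt: "\<forall>s t. t \<in> g s \<longrightarrow> g t = g s" and \<delta>: "\<delta> > 0"
          and sep: "\<forall>r\<in>C1. (\<Sum>B\<in>range g. c B * p B) + \<delta> \<le> (\<Sum>B\<in>range g. c B * r B)"
          using separate[OF alg C1S cC1 vC1 p pC1] by blast
        define L where "L r = (\<Sum>B\<in>range g. c B * r B)" for r :: "'s set \<Rightarrow> real"
        define M where "M = (\<Sum>B\<in>range g. \<bar>c B\<bar>) + \<delta>"
        define c' where "c' B = (if B \<in> range g then c B else 0)" for B
        have M0: "M > 0" using \<delta> unfolding M_def by (intro add_nonneg_pos sum_nonneg) auto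
        have cM: "\<bar>c' B\<bar> \<le> M" for B
        proof (cases "B \<in> range g")
          case True
          have "\<bar>c B\<bar> \<le> M" unfolding M_def by (rule c_bound[OF fin \<delta> True])
          then show ?thesis by (simp add: c'_def True)
        next
          case False
          then show ?thesis using M0 by (simp add: c'_def)
        qed
        have c'L: "(\<Sum>B\<in>range g. c' B * r B) = L r" for r
          unfolding L_def c'_def by (rule sum.cong) auto
        have gS': "\<And>s. g s \<in> Sig" and gs': "\<And>s. s \<in> g s" and gt': "\<And>s t. t \<in> g s \<Longrightarrow> g t = g s"
          using gS gs gt by blast+
        obtain f \<alpha> \<beta> where f: "f \<in> simple_acts Sig X" and \<beta>: "\<beta> > 0"
          and EUf0: "\<forall>r\<in>fa_probs Sig. EU u r f = \<alpha> + \<beta> * (\<Sum>B\<in>range g. c' B * r B)"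
          and val: "\<forall>w. \<bar>w\<bar> \<le> M \<longrightarrow> (\<exists>x\<in>X. u x = \<alpha> + \<beta> * w)"
          using realize_lin[where g=g and c=c' and M=M and Sig=Sig and X=X and u=u, OF alg cX aff x0 x1 lt fin gS' gs' gt' M0 cM] by blast
        have EUf: "\<forall>r\<in>fa_probs Sig. EU u r f = \<alpha> + \<beta> * L r"
          using EUf0 c'L by simp
        have Lb: "\<bar>L p\<bar> \<le> (\<Sum>B\<in>range g. \<bar>c B\<bar>)" unfolding L_def by (rule L_bound[OF alg p gS'])
        have "\<bar>L p + \<delta> / 2\<bar> \<le> \<bar>L p\<bar> + \<bar>\<delta> / 2\<bar>" by (rule abs_triangle_ineq)
        moreover have "\<bar>\<delta> / 2\<bar> = \<delta> / 2" using \<delta> by simp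
        ultimately have "\<bar>L p + \<delta> / 2\<bar> \<le> M" using Lb \<delta> unfolding M_def by linarith
        then obtain x where x: "x \<in> X" and ux: "u x = \<alpha> + \<beta> * (L p + \<delta> / 2)" using val by blast
        have "\<alpha> + \<beta> * (L p + \<delta>) \<le> (INF r\<in>C1. EU u r f)"
        proof (rule cINF_greatest)
          show "C1 \<noteq> {}" using CD1 by auto
          fix r assume r: "r \<in> C1"
          have "L p + \<delta> \<le> L r" using sep r unfolding L_def by auto
          then have "\<beta> * (L p + \<delta>) \<le> \<beta> * L r" using \<beta> by (intro mult_left_mono) auto
          moreover have "EU u r f = \<alpha> + \<beta> * L r" using EUf r C1S by blast
          ultimately show "\<alpha> + \<beta> * (L p + \<delta>) \<le> EU u r f" by linarith
        qed
        moreover have "\<beta> * (L p + \<delta> / 2) < \<beta> * (L p + \<delta>)" using \<beta> \<delta> by (intro mult_strict_left_mono) auto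
        ultimately have "u x < (INF r\<in>C1. EU u r f)" using ux by linarith
        then have "pref1 f (\<lambda>_. x)" using pref_fx(1)[OF alg h1 f x] by blast
        then have "pref2 f (\<lambda>_. x)" using av f x unfolding more_ambiguity_averse_def by blast
        then have "u x < (INF r\<in>C2. EU u r f)" using pref_fx(1)[OF alg h2 f x] by blast
        moreover have "(INF r\<in>C2. EU u r f) \<le> EU u p f"
          by (rule cINF_lower[OF bdd_EU(1)[OF alg C2S f] pC2])
        moreover have "EU u p f = \<alpha> + \<beta> * L p" using EUf p by blast
        moreover have "\<beta> * L p < \<beta> * (L p + \<delta> / 2)" using \<beta> \<delta> by (intro mult_strict_left_mono) auto
        ultimately show False using ux by linarith
      qed
    qed
  next
    assume sub: "C2 \<subseteq> C1"
    show "more_ambiguity_averse Sig X pref1 pref2"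
      unfolding more_ambiguity_averse_def
    proof (intro ballI impI)
      fix f x assume f: "f \<in> simple_acts Sig X" and x: "x \<in> X" and p1: "pref1 f (\<lambda>_. x)"
      have "u x < (INF r\<in>C1. EU u r f)" using p1 pref_fx(1)[OF alg h1 f x] by blast
      also have "(INF r\<in>C1. EU u r f) \<le> (INF r\<in>C2. EU u r f)"
        by (rule cINF_superset_mono[OF _ bdd_EU(1)[OF alg C1S f] sub]) (use CD2 in auto)
      finally show "pref2 f (\<lambda>_. x)" using pref_fx(1)[OF alg h2 f x] by blast
    qed
  qed
  have part2: "more_ambiguity_loving Sig X pref1 pref2 \<longleftrightarrow> D2 \<subseteq> D1"
  proof
    assume lv: "more_ambiguity_loving Sig X pref1 pref2"
    show "D2 \<subseteq> D1"
    proof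
      fix p assume pD2: "p \<in> D2"
      show "p \<in> D1"
      proof (rule ccontr)
        assume pD1: "p \<notin> D1"
        have p: "p \<in> fa_probs Sig" using pD2 D2S by auto
        obtain g c \<delta> where fin: "finite (range g)" and gS: "\<forall>s. g s \<in> Sig" and gs: "\<forall>s. s \<in> g s"
          and gt: "\<forall>s t. t \<in> g s \<longrightarrow> g t = g s" and \<delta>: "\<delta> > 0"
          and sep: "\<forall>r\<in>D1. (\<Sum>B\<in>range g. c B * p B) + \<delta> \<le> (\<Sum>B\<in>range g. c B * r B)"
          using separate[OF alg D1S cD1 vD1 p pD1] by blast
        define L where "L r = (\<Sum>B\<in>range g. c B * r B)" for r :: "'s set \<Rightarrow> real"
        define M where "M = (\<Sum>B\<in>range g. \<bar>c B\<bar>) + \<delta>"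
        define c' where "c' B = (if B \<in> range g then - c B else 0)" for B
        have M0: "M > 0" using \<delta> unfolding M_def by (intro add_nonneg_pos sum_nonneg) auto
        have cM: "\<bar>c' B\<bar> \<le> M" for B
        proof (cases "B \<in> range g")
          case True
          have "\<bar>c B\<bar> \<le> M" unfolding M_def by (rule c_bound[OF fin \<delta> True])
          then show ?thesis by (simp add: c'_def True)
        next
          case False
          then show ?thesis using M0 by (simp add: c'_def)
        qed
        have c'L: "(\<Sum>B\<in>range g. c' B * r B) = - L r" for r
          unfolding L_def c'_def sum_negf[symmetric] by (rule sum.cong) auto
        have gS': "\<And>s. g s \<in> Sig" and gs': "\<And>s. s \<in> g s" and gt': "\<And>s t. t \<in> g s \<Longrightarrow> g t = g s"
          using gS gs gt by blast+
        obtain f \<alpha> \<beta> where f: "f \<in> simple_acts Sig X" and \<beta>: "\<beta> > 0"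
          and EUf0: "\<forall>r\<in>fa_probs Sig. EU u r f = \<alpha> + \<beta> * (\<Sum>B\<in>range g. c' B * r B)"
          and val: "\<forall>w. \<bar>w\<bar> \<le> M \<longrightarrow> (\<exists>x\<in>X. u x = \<alpha> + \<beta> * w)"
          using realize_lin[where g=g and c=c' and M=M and Sig=Sig and X=X and u=u, OF alg cX aff x0 x1 lt fin gS' gs' gt' M0 cM] by blast
        have EUf: "\<forall>r\<in>fa_probs Sig. EU u r f = \<alpha> + \<beta> * (- L r)"
          using EUf0 c'L by simp
        have Lb: "\<bar>L p\<bar> \<le> (\<Sum>B\<in>range g. \<bar>c B\<bar>)" unfolding L_def by (rule L_bound[OF alg p gS'])
        have "\<bar>L p + \<delta> / 2\<bar> \<le> \<bar>L p\<bar> + \<bar>\<delta> / 2\<bar>" by (rule abs_triangle_ineq)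
        moreover have "\<bar>\<delta> / 2\<bar> = \<delta> / 2" using \<delta> by simp
        ultimately have "\<bar>L p + \<delta> / 2\<bar> \<le> M" using Lb \<delta> unfolding M_def by linarith
        then have "\<bar>- (L p + \<delta> / 2)\<bar> \<le> M" by simp
        then obtain x where x: "x \<in> X" and ux: "u x = \<alpha> + \<beta> * (- (L p + \<delta> / 2))" using val by blast
        have "(SUP r\<in>D1. EU u r f) \<le> \<alpha> - \<beta> * (L p + \<delta>)"
        proof (rule cSUP_least)
          show "D1 \<noteq> {}" using CD1 by auto
          fix r assume r: "r \<in> D1"
          have "L p + \<delta> \<le> L r" using sep r unfolding L_def by auto
          then have "\<beta> * (L p + \<delta>) \<le> \<beta> * L r" using \<beta> by (intro mult_left_mono) auto
          moreover have "EU u r f = \<alpha> + \<beta> * (- L r)" using EUf r D1S by blast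
          moreover have "\<beta> * (- L r) = - (\<beta> * L r)" by simp
          ultimately show "EU u r f \<le> \<alpha> - \<beta> * (L p + \<delta>)" by linarith
        qed
        moreover have "\<beta> * (L p + \<delta> / 2) < \<beta> * (L p + \<delta>)" using \<beta> \<delta> by (intro mult_strict_left_mono) auto
        moreover have "\<beta> * (- (L p + \<delta> / 2)) = - (\<beta> * (L p + \<delta> / 2))" by (rule mult_minus_right)
        ultimately have "(SUP r\<in>D1. EU u r f) < u x" using ux by linarith
        then have "pref1 (\<lambda>_. x) f" using pref_fx(2)[OF alg h1 f x] by blast
        then have "pref2 (\<lambda>_. x) f" using lv f x unfolding more_ambiguity_loving_def by blast
        then have "(SUP r\<in>D2. EU u r f) < u x" using pref_fx(2)[OF alg h2 f x] by blast
        moreover have "EU u p f \<le> (SUP r\<in>D2. EU u r f)"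
          by (rule cSUP_upper[OF pD2 bdd_EU(2)[OF alg D2S f]])
        moreover have "EU u p f = \<alpha> + \<beta> * (- L p)" using EUf p by blast
        moreover have "\<beta> * L p < \<beta> * (L p + \<delta> / 2)" using \<beta> \<delta> by (intro mult_strict_left_mono) auto
        moreover have "\<beta> * (- (L p + \<delta> / 2)) = - (\<beta> * (L p + \<delta> / 2))" by (rule mult_minus_right)
        moreover have "\<beta> * (- L p) = - (\<beta> * L p)" by simp
        ultimately show False using ux by linarith
      qed
    qed
  next
    assume sub: "D2 \<subseteq> D1"
    show "more_ambiguity_loving Sig X pref1 pref2"
      unfolding more_ambiguity_loving_def
    proof (intro ballI impI)
      fix f x assume f: "f \<in> simple_acts Sig X" and x: "x \<in> X" and p1: "pref1 (\<lambda>_. x) f"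
      have "(SUP r\<in>D2. EU u r f) \<le> (SUP r\<in>D1. EU u r f)"
        by (rule cSUP_subset_mono[OF _ bdd_EU(2)[OF alg D1S f] sub]) (use CD2 in auto)
      also have "(SUP r\<in>D1. EU u r f) < u x" using p1 pref_fx(2)[OF alg h1 f x] by blast
      finally show "pref2 (\<lambda>_. x) f" using pref_fx(2)[OF alg h2 f x] by blast
    qed
  qed
  show ?thesis using part1 part2 by blast
qed


end
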